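(* If $\varphi$ is an automorphism of $E$ of type 4, then the eigenspace of its linearization $\varphi_\ell$ in $L$ corresponding to the eigenvalue $-1$ is nonzero.
   Context: $F$ is a field of characteristic zero, $L$ an infinite-dimensional $F$-vector space with basis $e_1,e_2,\ldots$, $E$ the Grassmann algebra of $L$. An automorphism $\varphi$ of $E$ with $\varphi^2=\mathrm{id}$ is of type 4 if for every basis $\gamma$ of $L$ no element $v\in\gamma$ satisfies $\varphi(v)=\pm v$. Linearization: write $\varphi(e_i)=u_i+v_i$ with $u_i\in L$ and $v_i$ a linear combination of monomials of length $\ge2$; $\varphi_\ell$ is the endomorphism of $E$ with $\varphi_\ell(e_i)=u_i$ for all $i$ (it is an automorphism of order dividing 2, so $\varphi_\ell$ restricted to $L$ has eigenvalues among $\pm1$). *)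

theory Defs
  imports Complex_Main "HOL-Library.Function_Algebras"
begin

text \<open>An element of E is a function from finite index sets S (standing for the monomial
  e_S = e_{i1} ... e_{ik}, i1 < ... < ik) to its coefficient in F, with finite support.\<close>

type_synonym 'a grass = "nat set \<Rightarrow> 'a"

definition grassE :: "('a::field) grass set" where
  "grassE = {x. finite {S. x S \<noteq> 0} \<and> (\<forall>S. x S \<noteq> 0 \<longrightarrow> finite S)}"

text \<open>Scalar multiplication; addition is the pointwise one on functions.\<close>
definition gscale :: "'a::field \<Rightarrow> 'a grass \<Rightarrow> 'a grass" where
  "gscale c x = (\<lambda>S. c * x S)"

text \<open>Sign of e_S e_T = sign * e_{S \<union> T} for disjoint S, T.\<close>
definition gsign :: "nat set \<Rightarrow> nat set \<Rightarrow> 'a::field" where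
  "gsign S T = (-1) ^ card {(s, t). s \<in> S \<and> t \<in> T \<and> t < s}"

definition gmult :: "'a::field grass \<Rightarrow> 'a grass \<Rightarrow> 'a grass" where
  "gmult x y = (\<lambda>U. \<Sum>S\<in>Pow U. gsign S (U - S) * x S * y (U - S))"

definition gen :: "nat \<Rightarrow> 'a::field grass" where
  "gen i = (\<lambda>S. if S = {i} then 1 else 0)"

definition grassL :: "'a::field grass set" where
  "grassL = {x \<in> grassE. \<forall>S. x S \<noteq> 0 \<longrightarrow> card S = 1}"

definition is_grass_aut :: "('a::field grass \<Rightarrow> 'a grass) \<Rightarrow> bool" where
  "is_grass_aut \<phi> \<longleftrightarrow> bij_betw \<phi> grassE grassE
     \<and> (\<forall>x\<in>grassE. \<forall>y\<in>grassE. \<phi> (x + y) = \<phi> x + \<phi> y)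
     \<and> (\<forall>c. \<forall>x\<in>grassE. \<phi> (gscale c x) = gscale c (\<phi> x))
     \<and> (\<forall>x\<in>grassE. \<forall>y\<in>grassE. \<phi> (gmult x y) = gmult (\<phi> x) (\<phi> y))"

definition is_basis_L :: "'a::field grass set \<Rightarrow> bool" where
  "is_basis_L \<gamma> \<longleftrightarrow> \<gamma> \<subseteq> grassL \<and> module.independent gscale \<gamma>
     \<and> module.span gscale \<gamma> = grassL"

definition type4 :: "('a::field grass \<Rightarrow> 'a grass) \<Rightarrow> bool" where
  "type4 \<phi> \<longleftrightarrow> (\<forall>\<gamma>. is_basis_L \<gamma> \<longrightarrow> \<not> (\<exists>v\<in>\<gamma>. \<phi> v = v \<or> \<phi> v = - v))"

text \<open>Linearization phi_l restricted to L: the linear map with e_i \<mapsto> u_i, where u_i is the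
  degree-one component of phi(e_i).\<close>
definition lin_part :: "('a::field grass \<Rightarrow> 'a grass) \<Rightarrow> 'a grass \<Rightarrow> 'a grass" where
  "lin_part \<phi> x = (\<lambda>S. if card S = 1
       then (\<Sum>i\<in>{i. x {i} \<noteq> 0}. x {i} * \<phi> (gen i) S) else 0)"

end

theory Submission
  imports Defs
begin



lemma sum_fun_apply: "(sum f A) x = (\<Sum>a\<in>A. f a x)"
  by (induction A rule: infinite_finite_induct) auto

lemma vs_gscale: "vector_space (gscale :: 'a::field \<Rightarrow> 'a grass \<Rightarrow> 'a grass)"
  by unfold_locales (auto simp: gscale_def algebra_simps)

definition fil :: "nat \<Rightarrow> 'a::field grass \<Rightarrow> bool" where
  "fil k x \<longleftrightarrow> (\<forall>S. x S \<noteq> 0 \<longrightarrow> k \<le> card S)"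

definition gmono :: "nat set \<Rightarrow> 'a::field grass" where
  "gmono S = (\<lambda>T. if T = S then 1 else 0)"

lemma fil_add: "fil k x \<Longrightarrow> fil k y \<Longrightarrow> fil k (x + y)"
  unfolding fil_def by (metis add.right_neutral plus_fun_apply)
lemma fil_uminus: "fil k x \<Longrightarrow> fil k (- x)"
  unfolding fil_def by simp
lemma fil_diff: "fil k x \<Longrightarrow> fil k y \<Longrightarrow> fil k (x - y)"
  unfolding fil_def by (metis diff_zero minus_apply)
lemma fil_scale: "fil k x \<Longrightarrow> fil k (gscale c x)"
  unfolding fil_def gscale_def by simp
lemma fil_zero: "fil k 0"
  unfolding fil_def by simp
lemma fil_mono: "fil k x \<Longrightarrow> j \<le> k \<Longrightarrow> fil j x"
  unfolding fil_def by force
lemma fil_0: "fil 0 x" unfolding fil_def by simp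
lemma fil_sum: "(\<And>i. i \<in> I \<Longrightarrow> fil k (f i)) \<Longrightarrow> fil k (sum f I)"
  by (induction I rule: infinite_finite_induct) (auto intro: fil_add fil_zero)

lemma fil_gmult: assumes "fil a x" "fil b y" shows "fil (a + b) (gmult x y)"
  unfolding fil_def
proof (intro allI impI)
  fix U assume "gmult x y U \<noteq> 0"
  then have ne: "(\<Sum>S\<in>Pow U. gsign S (U - S) * x S * y (U - S)) \<noteq> 0" by (simp add: gmult_def)
  then have fin: "finite U" by (metis finite_Pow_iff sum.infinite)
  from ne obtain S where S: "S \<in> Pow U" "gsign S (U - S) * x S * y (U - S) \<noteq> 0"
    by (meson sum.neutral)
  then have "x S \<noteq> 0" "y (U - S) \<noteq> 0" by auto
  with assms have "a \<le> card S" "b \<le> card (U - S)" unfolding fil_def by auto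
  moreover have "card U = card S + card (U - S)" using S(1) fin
    by (metis PowD card_Diff_subset finite_subset le_add_diff_inverse card_mono)
  ultimately show "a + b \<le> card U" by linarith
qed

lemma gmult_diff_left: "gmult (x - y) z = gmult x z - gmult y z"
  unfolding gmult_def by (rule ext, simp only: minus_apply sum_subtractf[symmetric], rule sum.cong, auto simp: algebra_simps)
lemma gmult_diff_right: "gmult z (x - y) = gmult z x - gmult z y"
  unfolding gmult_def by (rule ext, simp only: minus_apply sum_subtractf[symmetric], rule sum.cong, auto simp: algebra_simps)
lemma gmult_scale_left: "gmult (gscale c x) z = gscale c (gmult x z)"
  unfolding gmult_def gscale_def by (auto simp: algebra_simps sum_distrib_left intro!: ext)
lemma gmult_scale_right: "gmult z (gscale c x) = gscale c (gmult z x)"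
  unfolding gmult_def gscale_def by (auto simp: algebra_simps sum_distrib_left intro!: ext)

lemma gsign_nz: "gsign S T \<noteq> (0::'a::field)"
  unfolding gsign_def by simp

lemma gen_mono: "gen i = gmono {i}" unfolding gen_def gmono_def by simp

lemma gmult_gen_mono:
  assumes "s \<notin> S" "finite S"
  shows "gmult (gen s) (gmono S) = gscale (gsign {s} S) (gmono (insert s S) :: 'a::field grass)"
proof (rule ext)
  fix U
  show "gmult (gen s) (gmono S) U = gscale (gsign {s} S) (gmono (insert s S) :: 'a grass) U"
  proof (cases "U = insert s S")
    case True
    have "gmult (gen s) (gmono S :: 'a grass) U = (\<Sum>T\<in>Pow U. if T = {s} then gsign {s} S else 0)"
      unfolding gmult_def
    proof (rule sum.cong[OF refl])
      fix T assume "T \<in> Pow U"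
      show "gsign T (U - T) * gen s T * gmono S (U - T) = (if T = {s} then gsign {s} S else (0::'a))"
      proof (cases "T = {s}")
        case True
        then have "U - T = S" using assms \<open>U = insert s S\<close> by auto
        then show ?thesis using True by (simp add: gen_def gmono_def)
      next
        case False
        then show ?thesis by (simp add: gen_def)
      qed
    qed
    also have "\<dots> = gsign {s} S" using True assms(2) sum.delta[of "Pow U" "{s}" "\<lambda>_. gsign {s} S"] by simp
    finally show ?thesis using True by (simp add: gscale_def gmono_def)
  next
    case False
    have "gmult (gen s) (gmono S :: 'a grass) U = (\<Sum>T\<in>Pow U. 0)"
      unfolding gmult_def
    proof (rule sum.cong[OF refl])
      fix T assume "T \<in> Pow U"
      show "gsign T (U - T) * gen s T * gmono S (U - T) = (0::'a)"
        using False \<open>T \<in> Pow U\<close> by (auto simp: gen_def gmono_def)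
    qed
    then show ?thesis using False by (simp add: gscale_def gmono_def)
  qed
qed

lemma gmult_gen_gen: "gmult (gen s) (gen s) = (0 :: 'a::field grass)"
proof (rule ext)
  fix U
  show "gmult (gen s) (gen s) U = (0 :: 'a grass) U"
    unfolding gmult_def by (auto simp: gen_def intro!: sum.neutral)
qed

lemma gmult_empty: "gmult x x {} = x {} * (x {} :: 'a::field)"
  by (simp add: gmult_def gsign_def)




lemma E_add: "x \<in> grassE \<Longrightarrow> y \<in> grassE \<Longrightarrow> x + y \<in> grassE"
proof -
  assume x: "x \<in> grassE" and y: "y \<in> grassE"
  have "{S. (x + y) S \<noteq> 0} \<subseteq> {S. x S \<noteq> 0} \<union> {S. y S \<noteq> 0}" by auto
  with x y show ?thesis unfolding grassE_def by (auto intro: finite_subset)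
qed
lemma E_scale: "x \<in> grassE \<Longrightarrow> gscale c x \<in> grassE"
proof -
  assume x: "x \<in> grassE"
  have "{S. gscale c x S \<noteq> 0} \<subseteq> {S. x S \<noteq> 0}" by (auto simp: gscale_def)
  with x show ?thesis unfolding grassE_def by (auto intro: finite_subset simp: gscale_def)
qed
lemma E_zero: "0 \<in> grassE" unfolding grassE_def by simp
lemma E_uminus: "x \<in> grassE \<Longrightarrow> - x \<in> grassE"
  unfolding grassE_def by simp
lemma E_diff: "x \<in> grassE \<Longrightarrow> y \<in> grassE \<Longrightarrow> x - y \<in> grassE"
  using E_add[of x "- y"] E_uminus[of y] by simp
lemma E_sum: "(\<And>i. i \<in> I \<Longrightarrow> f i \<in> grassE) \<Longrightarrow> sum f I \<in> grassE"
  by (induction I rule: infinite_finite_induct) (auto intro: E_add E_zero)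
lemma mono_E: "finite S \<Longrightarrow> gmono S \<in> grassE"
proof -
  assume "finite S"
  have "{T. gmono S T \<noteq> (0::'a)} \<subseteq> {S}" by (auto simp: gmono_def)
  then show ?thesis using \<open>finite S\<close> unfolding grassE_def
    by (auto intro: finite_subset simp: gmono_def)
qed
lemma gen_E: "gen i \<in> grassE" using mono_E[of "{i}"] by (simp add: gen_mono)

lemma fil_mono_card: "fil (card S) (gmono S)" unfolding fil_def gmono_def by auto
lemma fil_gen: "fil 1 (gen i)" unfolding fil_def gen_def by auto

lemma decomp: assumes "v \<in> grassE"
  shows "v = (\<Sum>S\<in>{S. v S \<noteq> 0}. gscale (v S) (gmono S))"
proof (rule ext)
  fix T
  have fin: "finite {S. v S \<noteq> 0}" using assms by (simp add: grassE_def)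
  have "(\<Sum>S\<in>{S. v S \<noteq> 0}. gscale (v S) (gmono S)) T = (\<Sum>S\<in>{S. v S \<noteq> 0}. if S = T then v T else 0)"
    unfolding sum_fun_apply by (rule sum.cong) (auto simp: gscale_def gmono_def)
  also have "\<dots> = v T" using fin by (simp add: sum.delta')
  finally show "v T = (\<Sum>S\<in>{S. v S \<noteq> 0}. gscale (v S) (gmono S)) T" by simp
qed

context
  fixes \<phi> :: "'a::field grass \<Rightarrow> 'a grass"
  assumes aut: "is_grass_aut \<phi>"
begin

lemma aE: "x \<in> grassE \<Longrightarrow> \<phi> x \<in> grassE"
  using aut unfolding is_grass_aut_def bij_betw_def by auto
lemma a_add: "x \<in> grassE \<Longrightarrow> y \<in> grassE \<Longrightarrow> \<phi> (x + y) = \<phi> x + \<phi> y"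
  using aut unfolding is_grass_aut_def by auto
lemma a_scale: "x \<in> grassE \<Longrightarrow> \<phi> (gscale c x) = gscale c (\<phi> x)"
  using aut unfolding is_grass_aut_def by auto
lemma a_mult: "x \<in> grassE \<Longrightarrow> y \<in> grassE \<Longrightarrow> \<phi> (gmult x y) = gmult (\<phi> x) (\<phi> y)"
  using aut unfolding is_grass_aut_def by auto
lemma a_zero: "\<phi> 0 = 0"
proof -
  have "\<phi> 0 + \<phi> 0 = \<phi> 0 + 0" using a_add[OF E_zero E_zero] by (metis add.right_neutral)
  then show ?thesis by (rule add_left_imp_eq)
qed
lemma a_uminus: "x \<in> grassE \<Longrightarrow> \<phi> (- x) = - \<phi> x"
proof -
  assume x: "x \<in> grassE"
  have "- x = gscale (-1) x" by (auto simp: gscale_def)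
  moreover have "- \<phi> x = gscale (-1) (\<phi> x)" by (auto simp: gscale_def)
  ultimately show ?thesis using a_scale[OF x] by simp
qed
lemma a_diff: "x \<in> grassE \<Longrightarrow> y \<in> grassE \<Longrightarrow> \<phi> (x - y) = \<phi> x - \<phi> y"
  using a_add[of x "- y"] a_uminus[of y] E_uminus[of y] by simp

lemma a_sum: "finite I \<Longrightarrow> (\<And>i. i \<in> I \<Longrightarrow> f i \<in> grassE) \<Longrightarrow>
   \<phi> (\<Sum>i\<in>I. gscale (c i) (f i)) = (\<Sum>i\<in>I. gscale (c i) (\<phi> (f i)))"
proof (induction I rule: finite_induct)
  case empty then show ?case by (simp only: sum.empty a_zero)
  next
  case (insert a I)
  have "\<phi> (\<Sum>i\<in>insert a I. gscale (c i) (f i)) = \<phi> (gscale (c a) (f a) + (\<Sum>i\<in>I. gscale (c i) (f i)))"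
    using insert by simp
  also have "\<dots> = gscale (c a) (\<phi> (f a)) + \<phi> (\<Sum>i\<in>I. gscale (c i) (f i))"
    using insert by (simp add: a_add a_scale E_scale E_sum)
  also have "\<phi> (\<Sum>i\<in>I. gscale (c i) (f i)) = (\<Sum>i\<in>I. gscale (c i) (\<phi> (f i)))"
    using insert by blast
  finally show ?case by (simp only: sum.insert[OF insert(1) insert(2)])
qed

lemma mono_lemma:
  assumes gen_hyp: "\<And>j. fil (1 + d) (\<phi> (gen j) - gscale t (gen j))"
  and "finite S" "S \<noteq> {}"
  shows "fil (card S + d) (\<phi> (gmono S) - gscale (t ^ card S) (gmono S))"
  using assms(2,3)
proof (induction S rule: finite_ne_induct)
  case (singleton s)
  have "fil (1 + d) (\<phi> (gmono {s}) - gscale t (gmono {s}))" using gen_hyp[of s] unfolding gen_mono .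
  moreover have "card {s} + d = 1 + d" "t ^ card {s} = t" by auto
  ultimately show ?case by metis
next
  case (insert s S)
  define k where "k = card S"
  define \<sigma> :: 'a where "\<sigma> = gsign {s} S"
  have sn: "\<sigma> \<noteq> 0" unfolding \<sigma>_def by (rule gsign_nz)
  define X where "X = \<phi> (gen s)"
  define X' where "X' = gscale t (gen s)"
  define Y where "Y = \<phi> (gmono S)"
  define Y' where "Y' = gscale (t ^ k) (gmono S :: 'a grass)"
  have gm: "gmult (gen s) (gmono S) = gscale \<sigma> (gmono (insert s S))"
    unfolding \<sigma>_def using insert by (simp add: gmult_gen_mono)
  have m: "gmono (insert s S) = gscale (1 / \<sigma>) (gmult (gen s) (gmono S))"
    using sn unfolding gm by (auto simp: gscale_def)
  have gE: "gmult (gen s) (gmono S :: 'a grass) \<in> grassE" unfolding gm using insert by (simp add: E_scale mono_E)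
  have "\<phi> (gmono (insert s S)) = gscale (1 / \<sigma>) (\<phi> (gmult (gen s) (gmono S)))"
    unfolding m by (rule a_scale[OF gE])
  also have "\<phi> (gmult (gen s) (gmono S)) = gmult X Y"
    unfolding X_def Y_def using insert by (simp add: a_mult gen_E mono_E)
  finally have "\<phi> (gmono (insert s S)) = gscale (1 / \<sigma>) (gmult X Y)" .
  moreover have "gmult X Y = gmult (X - X') Y + gmult X' (Y - Y') + gmult X' Y'"
    by (simp add: gmult_diff_left gmult_diff_right)
  moreover have "gmult X' Y' = gscale (t ^ (k + 1) * \<sigma>) (gmono (insert s S))"
    unfolding X'_def Y'_def gmult_scale_left gmult_scale_right gm
    by (auto simp: gscale_def)
  ultimately have eq: "\<phi> (gmono (insert s S)) - gscale (t ^ card (insert s S)) (gmono (insert s S))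
      = gscale (1 / \<sigma>) (gmult (X - X') Y + gmult X' (Y - Y'))"
    using insert sn unfolding k_def by (auto simp: gscale_def field_simps)
  have f1: "fil (1 + d) (X - X')" unfolding X_def X'_def by (rule gen_hyp)
  have f2: "fil (k + d) (Y - Y')" using insert.IH unfolding Y_def Y'_def k_def .
  have f3: "fil k Y'" unfolding Y'_def k_def by (rule fil_scale, rule fil_mono_card)
  have f4: "fil k Y" using fil_add[OF fil_mono[OF f2, of k] f3] by simp
  have f5: "fil 1 X'" unfolding X'_def by (rule fil_scale, rule fil_gen)
  have "fil (1 + d + k) (gmult (X - X') Y)" by (rule fil_gmult[OF f1 f4])
  moreover have "fil (1 + (k + d)) (gmult X' (Y - Y'))" by (rule fil_gmult[OF f5 f2])
  ultimately have "fil (card (insert s S) + d) (gmult (X - X') Y + gmult X' (Y - Y'))"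
    using insert unfolding k_def by (auto intro: fil_add simp: ac_simps)
  then show ?case unfolding eq by (rule fil_scale)
qed

lemma decomp_lemma:
  assumes "v \<in> grassE" "\<And>S. v S \<noteq> 0 \<Longrightarrow> fil m (\<phi> (gmono S) - w S)"
  shows "fil m (\<phi> v - (\<Sum>S\<in>{S. v S \<noteq> 0}. gscale (v S) (w S)))"
proof -
  have fin: "finite {S. v S \<noteq> 0}" using assms by (simp add: grassE_def)
  have monoE: "S \<in> {S. v S \<noteq> 0} \<Longrightarrow> gmono S \<in> grassE" for S
    using assms(1) by (intro mono_E) (auto simp: grassE_def)
  have "\<phi> v = (\<Sum>S\<in>{S. v S \<noteq> 0}. gscale (v S) (\<phi> (gmono S)))"
    by (subst decomp[OF assms(1)], rule a_sum[OF fin monoE])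
  then have "\<phi> v - (\<Sum>S\<in>{S. v S \<noteq> 0}. gscale (v S) (w S)) =
     (\<Sum>S\<in>{S. v S \<noteq> 0}. gscale (v S) (\<phi> (gmono S) - w S))"
    by (auto intro!: ext simp: sum_fun_apply sum_subtractf[symmetric] gscale_def algebra_simps)
  then show ?thesis using assms(2) by (auto intro!: fil_sum fil_scale)
qed

end



definition P1 :: "'a::field grass \<Rightarrow> 'a grass" where
  "P1 x = (\<lambda>S. if card S = 1 then x S else 0)"

lemma P1_add: "P1 (x + y) = P1 x + P1 y" unfolding P1_def by auto
lemma P1_diff: "P1 (x - y) = P1 x - P1 y" unfolding P1_def by auto
lemma P1_fil2: assumes "fil 2 x" shows "P1 x = 0"
proof (rule ext)
  fix S
  have "x S \<noteq> 0 \<Longrightarrow> 2 \<le> card S" using assms unfolding fil_def by blast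
  then show "P1 x S = 0 S" unfolding P1_def by (cases "card S = 1") auto
qed
lemma P1_L: "x \<in> grassL \<Longrightarrow> P1 x = x" unfolding P1_def grassL_def by (auto intro!: ext)
lemma L_E: "x \<in> grassL \<Longrightarrow> x \<in> grassE" unfolding grassL_def by auto
lemma L_fil: "x \<in> grassL \<Longrightarrow> fil 1 x" unfolding grassL_def fil_def by auto
lemma P1_inL: "y \<in> grassE \<Longrightarrow> P1 y \<in> grassL"
proof -
  assume y: "y \<in> grassE"
  have "{S. P1 y S \<noteq> 0} \<subseteq> {S. y S \<noteq> 0}" by (auto simp: P1_def)
  then have "finite {S. P1 y S \<noteq> 0}" using y unfolding grassE_def by (auto intro: finite_subset)
  moreover have "P1 y S \<noteq> 0 \<Longrightarrow> finite S \<and> card S = 1" for S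
    using y unfolding grassE_def P1_def by (cases "card S = 1") auto
  ultimately show ?thesis unfolding grassL_def grassE_def by blast
qed
lemma L_diff: assumes "x \<in> grassL" "y \<in> grassL" shows "x - y \<in> grassL"
proof -
  have "x - y \<in> grassE" using assms E_diff unfolding grassL_def by blast
  moreover have "(x - y) S \<noteq> 0 \<Longrightarrow> card S = 1" for S
  proof -
    assume "(x - y) S \<noteq> 0"
    then have "x S \<noteq> 0 \<or> y S \<noteq> 0" by auto
    then show "card S = 1" using assms unfolding grassL_def by blast
  qed
  ultimately show ?thesis unfolding grassL_def by blast
qed
lemma L_add: assumes "x \<in> grassL" "y \<in> grassL" shows "x + y \<in> grassL"
proof -
  have "x + y \<in> grassE" using assms E_add unfolding grassL_def by blast
  moreover have "(x + y) S \<noteq> 0 \<Longrightarrow> card S = 1" for S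
  proof -
    assume "(x + y) S \<noteq> 0"
    then have "x S \<noteq> 0 \<or> y S \<noteq> 0" by auto
    then show "card S = 1" using assms unfolding grassL_def by blast
  qed
  ultimately show ?thesis unfolding grassL_def by blast
qed
lemma L_scale: assumes "x \<in> grassL" shows "gscale c x \<in> grassL"
proof -
  have "gscale c x \<in> grassE" using assms E_scale unfolding grassL_def by blast
  moreover have "gscale c x S \<noteq> 0 \<Longrightarrow> card S = 1" for S
    using assms unfolding grassL_def gscale_def by auto
  ultimately show ?thesis unfolding grassL_def by blast
qed
lemma L_zero: "0 \<in> grassL" unfolding grassL_def using E_zero by simp
lemma gen_L: "gen i \<in> grassL" unfolding grassL_def using gen_E by (simp add: gen_def)

lemma gscale_zero_right: "gscale c 0 = 0" by (auto simp: gscale_def)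
lemma gscale_zero_left: "gscale 0 x = 0" by (auto simp: gscale_def)
lemma gscale_one: "gscale 1 x = x" by (auto simp: gscale_def)

lemma L_decomp: assumes z: "z \<in> grassL"
  shows "finite {i. z {i} \<noteq> 0}" "z = (\<Sum>i\<in>{i. z {i} \<noteq> 0}. gscale (z {i}) (gen i))"
proof -
  have "{i. z {i} \<noteq> 0} = (\<lambda>i. {i}) -` {S. z S \<noteq> 0}" by auto
  moreover have "finite {S. z S \<noteq> 0}" using z by (simp add: grassL_def grassE_def)
  ultimately show fin: "finite {i. z {i} \<noteq> 0}" by (metis finite_vimageI inj_singleton)
  show "z = (\<Sum>i\<in>{i. z {i} \<noteq> 0}. gscale (z {i}) (gen i))"
  proof (rule ext)
    fix S
    show "z S = (\<Sum>i\<in>{i. z {i} \<noteq> 0}. gscale (z {i}) (gen i)) S"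
    proof (cases "card S = 1")
      case True
      then obtain j where j: "S = {j}" by (auto simp: card_1_singleton_iff)
      have "(\<Sum>i\<in>{i. z {i} \<noteq> 0}. gscale (z {i}) (gen i)) S = (\<Sum>i\<in>{i. z {i} \<noteq> 0}. if i = j then z {j} else 0)"
        unfolding sum_fun_apply j by (rule sum.cong) (auto simp: gscale_def gen_def)
      also have "\<dots> = z S" using fin j by (simp add: sum.delta')
      finally show ?thesis by simp
    next
      case False
      then have "z S = 0" using z by (auto simp: grassL_def)
      moreover have "(\<Sum>i\<in>{i. z {i} \<noteq> 0}. gscale (z {i}) (gen i)) S = 0"
        unfolding sum_fun_apply using False by (intro sum.neutral) (auto simp: gscale_def gen_def)
      ultimately show ?thesis by simp
    qed
  qed
qed

context
  fixes \<phi> :: "'a::field_char_0 grass \<Rightarrow> 'a grass"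
  assumes aut: "is_grass_aut \<phi>"
  and inv: "\<forall>x\<in>grassE. \<phi> (\<phi> x) = x"
begin

lemma lin_eq: assumes z: "z \<in> grassL" shows "lin_part \<phi> z = P1 (\<phi> z)"
proof -
  have "\<phi> z = (\<Sum>i\<in>{i. z {i} \<noteq> 0}. gscale (z {i}) (\<phi> (gen i)))"
    by (subst L_decomp(2)[OF z], rule a_sum[OF aut L_decomp(1)[OF z] gen_E])
  then show ?thesis unfolding lin_part_def P1_def
    by (auto intro!: ext simp: sum_fun_apply gscale_def)
qed

lemma gen_const: "\<phi> (gen j) {} = 0"
proof -
  have "gmult (\<phi> (gen j)) (\<phi> (gen j)) = \<phi> (gmult (gen j) (gen j))"
    by (simp add: a_mult[OF aut] gen_E)
  also have "\<dots> = 0" by (simp only: gmult_gen_gen a_zero[OF aut])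
  finally have "gmult (\<phi> (gen j)) (\<phi> (gen j)) {} = 0" by simp
  then show ?thesis by (simp add: gmult_empty)
qed

lemma fil1_gen: "fil 1 (\<phi> (gen j))"
  unfolding fil_def
proof (intro allI impI)
  fix S assume "\<phi> (gen j) S \<noteq> 0"
  moreover have "\<phi> (gen j) \<in> grassE" by (rule aE[OF aut gen_E])
  ultimately have "finite S" "S \<noteq> {}" using gen_const[of j] by (auto simp: grassE_def)
  then show "1 \<le> card S" by (simp add: Suc_le_eq card_gt_0_iff)
qed

lemma fil_phi: assumes "v \<in> grassE" "fil k v" "1 \<le> k" shows "fil k (\<phi> v)"
proof -
  have hyp: "fil (1 + 0) (\<phi> (gen j) - gscale 0 (gen j))" for j
    using fil1_gen[of j] by (simp add: gscale_zero_left)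
  have "fil k (\<phi> v - (\<Sum>S\<in>{S. v S \<noteq> 0}. gscale (v S) ((\<lambda>_. 0) S)))"
  proof (rule decomp_lemma[OF aut assms(1)])
    fix S assume vS: "v S \<noteq> 0"
    then have fin: "finite S" using assms(1) by (auto simp: grassE_def)
    have kS: "k \<le> card S" using vS assms(2) by (auto simp: fil_def)
    then have ne: "S \<noteq> {}" using assms(3) by auto
    have "fil (card S + 0) (\<phi> (gmono S) - gscale (0 ^ card S) (gmono S))"
      by (rule mono_lemma[OF aut hyp fin ne])
    moreover have "(0::'a) ^ card S = 0" using fin ne by (simp add: card_gt_0_iff)
    ultimately have "fil (card S) (\<phi> (gmono S))" by (simp add: gscale_zero_left)
    then show "fil k (\<phi> (gmono S) - (\<lambda>_. 0) S)" using kS by (simp add: fil_mono)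
  qed
  then show ?thesis by (simp add: gscale_zero_right)
qed

lemma AA: assumes x: "x \<in> grassL" shows "P1 (\<phi> (P1 (\<phi> x))) = x"
proof -
  define y where "y = \<phi> x"
  have yE: "y \<in> grassE" unfolding y_def by (rule aE[OF aut L_E[OF x]])
  have fy: "fil 1 y" unfolding y_def by (rule fil_phi[OF L_E[OF x] L_fil[OF x]]) simp
  define h where "h = y - P1 y"
  have hE: "h \<in> grassE" unfolding h_def by (rule E_diff[OF yE L_E[OF P1_inL[OF yE]]])
  have fh: "fil 2 h" unfolding fil_def
  proof (intro allI impI)
    fix S assume hS: "h S \<noteq> 0"
    then have "card S \<noteq> 1" "y S \<noteq> 0" unfolding h_def P1_def by (auto split: if_splits)
    moreover have "y S \<noteq> 0 \<Longrightarrow> 1 \<le> card S" using fy unfolding fil_def by blast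
    ultimately show "2 \<le> card S" by linarith
  qed
  have "x = \<phi> y" unfolding y_def using inv L_E[OF x] by simp
  also have "\<dots> = \<phi> (P1 y) + \<phi> h" unfolding h_def
    using a_add[OF aut L_E[OF P1_inL[OF yE]] hE] h_def by simp
  finally have "P1 x = P1 (\<phi> (P1 y)) + P1 (\<phi> h)" by (simp add: P1_add)
  moreover have "P1 (\<phi> h) = 0" by (rule P1_fil2, rule fil_phi[OF hE fh]) simp
  ultimately show ?thesis using P1_L[OF x] y_def by simp
qed

lemma A_id:
  assumes H: "\<forall>x\<in>grassL. x \<noteq> 0 \<longrightarrow> lin_part \<phi> x \<noteq> - x"
  and x: "x \<in> grassL"
  shows "P1 (\<phi> x) = x"
proof -
  define z where "z = x - P1 (\<phi> x)"
  have AxL: "P1 (\<phi> x) \<in> grassL" by (rule P1_inL[OF aE[OF aut L_E[OF x]]])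
  have zL: "z \<in> grassL" unfolding z_def by (rule L_diff[OF x AxL])
  have "P1 (\<phi> z) = P1 (\<phi> x) - P1 (\<phi> (P1 (\<phi> x)))"
    unfolding z_def by (simp add: a_diff[OF aut L_E[OF x] L_E[OF AxL]] P1_diff)
  also have "\<dots> = - z" unfolding z_def AA[OF x] by simp
  finally have "lin_part \<phi> z = - z" using lin_eq[OF zL] by simp
  with H zL have "z = 0" by blast
  then show ?thesis unfolding z_def by simp
qed

lemma phi_gen_id:
  assumes H: "\<forall>x\<in>grassL. x \<noteq> 0 \<longrightarrow> lin_part \<phi> x \<noteq> - x"
  shows "\<phi> (gen i) = gen i"
proof -
  have f2: "fil 2 (\<phi> (gen j) - gen j)" for j
    unfolding fil_def
  proof (intro allI impI)
    fix S assume ne: "(\<phi> (gen j) - gen j) S \<noteq> 0"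
    have E: "\<phi> (gen j) \<in> grassE" by (rule aE[OF aut gen_E])
    have P: "P1 (\<phi> (gen j)) S = gen j S" using A_id[OF H gen_L] by simp
    have "\<phi> (gen j) S \<noteq> 0 \<or> (gen j :: 'a grass) S \<noteq> 0" using ne by auto
    then have fin: "finite S" using E by (auto simp: grassE_def gen_def split: if_splits)
    have "S \<noteq> {}" using ne gen_const[of j] by (auto simp: gen_def)
    then have "card S \<noteq> 0" using fin by simp
    moreover have "card S \<noteq> 1" using P ne by (auto simp: P1_def)
    ultimately show "2 \<le> card S" by linarith
  qed
  have hyp: "fil (1 + 1) (\<phi> (gen j) - gscale 1 (gen j))" for j
    unfolding gscale_one one_add_one by (rule f2)
  have step: "fil (k + 1) (\<phi> v - v)" if v: "v \<in> grassE" "fil k v" "1 \<le> k" for v k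
  proof -
    have "fil (k + 1) (\<phi> v - (\<Sum>S\<in>{S. v S \<noteq> 0}. gscale (v S) (gmono S)))"
    proof (rule decomp_lemma[OF aut v(1)])
      fix S assume vS: "v S \<noteq> 0"
      then have fin: "finite S" using v(1) by (auto simp: grassE_def)
      have kS: "k \<le> card S" using vS v(2) by (auto simp: fil_def)
      then have ne: "S \<noteq> {}" using v(3) by auto
      have "fil (card S + 1) (\<phi> (gmono S) - gscale (1 ^ card S) (gmono S))"
        by (rule mono_lemma[OF aut hyp fin ne])
      then show "fil (k + 1) (\<phi> (gmono S) - gmono S)" using kS
        by (simp add: gscale_one fil_mono)
    qed
    then show ?thesis using decomp[OF v(1)] by simp
  qed
  define h where "h = \<phi> (gen i) - gen i"
  have hE: "h \<in> grassE" unfolding h_def by (rule E_diff[OF aE[OF aut gen_E] gen_E])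
  have giE: "(gen i :: 'a grass) \<in> grassE" by (rule gen_E)
  have ph: "\<phi> h = - h"
    unfolding h_def using a_diff[OF aut aE[OF aut giE] giE] inv giE by simp
  have "fil (n + 1) h" for n
  proof (induction n)
    case 0 then show ?case using fil_mono[OF f2[of i], of "0 + 1"] unfolding h_def by (simp add: fun_diff_def)
  next
    case (Suc n)
    have "fil (n + 1 + 1) (\<phi> h - h)" by (rule step[OF hE Suc]) simp
    then show ?case unfolding ph fil_def by auto
  qed
  have "h = 0"
  proof (rule ext)
    fix S
    show "h S = 0 S"
    proof (rule ccontr)
      assume "h S \<noteq> 0 S"
      then have "h S \<noteq> 0" by simp
      with \<open>fil (card S + 1) h\<close> show False unfolding fil_def by auto
    qed
  qed
  then show ?thesis unfolding h_def by simp
qed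

end




theorem mainTheorem15:
  fixes \<phi> :: "'a::field_char_0 grass \<Rightarrow> 'a grass"
  assumes "is_grass_aut \<phi>"
    and "\<forall>x\<in>grassE. \<phi> (\<phi> x) = x"
    and "type4 \<phi>"
  shows "\<exists>x\<in>grassL. x \<noteq> 0 \<and> lin_part \<phi> x = - x"
proof (rule ccontr)
  assume "\<not> ?thesis"
  then have H: "\<forall>x\<in>grassL. x \<noteq> 0 \<longrightarrow> lin_part \<phi> x \<noteq> - x" by blast
  have fix0: "\<phi> (gen 0) = gen 0" by (rule phi_gen_id[OF assms(1,2) H])
  interpret V: vector_space "gscale :: 'a \<Rightarrow> 'a grass \<Rightarrow> 'a grass" by (rule vs_gscale)
  have g0: "(gen 0 :: 'a grass) \<noteq> 0"
  proof
    assume "(gen 0 :: 'a grass) = 0"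
    then have "(gen 0 :: 'a grass) {0} = 0" by simp
    then show False by (simp add: gen_def)
  qed
  have ind: "V.independent {gen 0 :: 'a grass}"
    using g0 by (simp add: V.independent_insert V.span_empty)
  have sub: "{gen 0 :: 'a grass} \<subseteq> grassL" using gen_L by simp
  obtain B where B: "{gen 0} \<subseteq> B" "B \<subseteq> grassL" "V.independent B" "grassL \<subseteq> V.span B"
    by (rule V.maximal_independent_subset_extend[OF sub ind])
  have subL: "V.subspace (grassL :: 'a grass set)"
    unfolding V.subspace_def using L_zero L_add L_scale by blast
  have "V.span B \<subseteq> grassL" by (rule V.span_minimal[OF B(2) subL])
  with B have "is_basis_L B" unfolding is_basis_L_def by blast
  moreover have "gen 0 \<in> B" using B(1) by simp
  ultimately show False using assms(3) fix0 unfolding type4_def by blast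
qed


end
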